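(* Let $\mathbf W$, $\mathbf L_{rw}$ be as in the context, let $\mu>0$, and let $\mathbf H\in\{0,1\}^{K\times N}$ with $1\le K<N$ be a sampling matrix (each row has exactly one entry $1$, in distinct columns). Then $\mathbf H^\top\mathbf H+\mu\,\mathbf L_{rw}^\top\mathbf L_{rw}$ is positive definite; consequently, for every $\mathbf y\in\mathbb R^K$ the problem $\min_{\mathbf x\in\mathbb R^N}\|\mathbf H\mathbf x-\mathbf y\|_2^2+\mu\,\mathbf x^\top\mathbf L_{rw}^\top\mathbf L_{rw}\mathbf x$ has the unique minimizer $\mathbf x^*=(\mathbf H^\top\mathbf H+\mu\mathbf L_{rw}^\top\mathbf L_{rw})^{-1}\mathbf H^\top\mathbf y$.
   Context: A directed graph on $N$ nodes is given by an adjacency matrix $\mathbf W\in\mathbb R^{N\times N}$ with $W_{i,j}\ge 0$ ($W_{i,j}>0$ iff there is a directed edge $(i,j)$) and $W_{i,i}=0$ for all $i$. The out-degree matrix is the diagonal matrix $\mathbf D$ with $D_{i,i}=\sum_j W_{i,j}$; it is assumed that $D_{i,i}>0$ for all $i$. The normalized adjacency matrix is $\bar{\mathbf W}=\mathbf D^{-1}\mathbf W$ and the random-walk Laplacian is $\mathbf L_{rw}=\mathbf I-\bar{\mathbf W}$. It is assumed that there exists a node $v$ such that from every other node there is a directed path to $v$. *)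

theory Defs
  imports "HOL-Analysis.Analysis"
begin

definition edges :: "real^'n^'n \<Rightarrow> ('n \<times> 'n) set" where
  "edges W = {(i, j). W $ i $ j > 0}"

definition out_degree :: "real^'n^'n \<Rightarrow> 'n \<Rightarrow> real" where
  "out_degree W i = (\<Sum>j\<in>UNIV. W $ i $ j)"

definition norm_adj :: "real^'n^'n \<Rightarrow> real^'n^'n" where
  "norm_adj W = (\<chi> i j. W $ i $ j / out_degree W i)"

definition L_rw :: "real^'n^'n \<Rightarrow> real^'n^'n" where
  "L_rw W = mat 1 - norm_adj W"

definition sampling_matrix :: "real^'n^'k \<Rightarrow> bool" where
  "sampling_matrix H \<longleftrightarrow>
     (\<forall>i j. H $ i $ j = 0 \<or> H $ i $ j = 1) \<and>
     (\<forall>i. \<exists>!j. H $ i $ j = 1) \<and>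
     (\<forall>i i' j. H $ i $ j = 1 \<and> H $ i' $ j = 1 \<longrightarrow> i = i')"

definition pos_definite :: "real^'n^'n \<Rightarrow> bool" where
  "pos_definite A \<longleftrightarrow> transpose A = A \<and> (\<forall>x. x \<noteq> 0 \<longrightarrow> x \<bullet> (A *v x) > 0)"

end

theory Submission
  imports Defs
begin

lemma dot_mv: "(x::real^'n) \<bullet> (A *v y) = (transpose A *v x) \<bullet> (y::real^'m)"
  by (metis dot_lmul_matrix transpose_matrix_vector)

lemma quad_eq: "(x::real^'n) \<bullet> ((transpose A ** A) *v x) = (norm (A *v x))\<^sup>2"
  by (metis dot_mv matrix_vector_mul_assoc transpose_transpose power2_norm_eq_inner)

lemma transpose_add': "transpose (A + B) = transpose A + transpose (B::real^'n^'m)"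
  by (simp add: transpose_def vec_eq_iff)

lemma harmonic_max:
  fixes W :: "real^'n^'n" and x :: "real^'n"
  assumes nonneg: "\<forall>i j. W $ i $ j \<ge> 0"
    and deg_pos: "\<forall>i. out_degree W i > 0"
    and L0: "L_rw W *v x = 0"
    and path: "(i, v) \<in> (edges W)\<^sup>+"
    and imax: "x $ i = Max (range (\<lambda>j. x $ j))"
  shows "x $ v = Max (range (\<lambda>j. x $ j))"
proof -
  define m where "m = Max (range (\<lambda>j. x $ j))"
  have le: "\<And>j. x $ j \<le> m" unfolding m_def by (rule Max_ge) auto
  have stp: "x $ b = m" if "x $ a = m" "(a, b) \<in> edges W" for a b
  proof -
    have "(L_rw W *v x) $ a = 0" using L0 by simp
    hence "(\<Sum>j\<in>UNIV. ((if a = j then 1 else 0) - W $ a $ j / out_degree W a) * x $ j) = 0"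
      by (simp add: L_rw_def norm_adj_def matrix_vector_mult_def mat_def)
    hence "(\<Sum>j\<in>UNIV. (if a = j then x $ j else 0)) - (\<Sum>j\<in>UNIV. W $ a $ j / out_degree W a * x $ j) = 0"
      by (simp add: left_diff_distrib sum_subtractf if_distrib[where f="\<lambda>t. t * _"] cong: if_cong)
    hence "x $ a - (\<Sum>j\<in>UNIV. W $ a $ j / out_degree W a * x $ j) = 0"
      by simp
    hence "x $ a * out_degree W a = (\<Sum>j\<in>UNIV. W $ a $ j * x $ j)"
      using deg_pos[rule_format, of a]
      by (simp add: sum_divide_distrib[symmetric] field_simps)
    hence "(\<Sum>j\<in>UNIV. W $ a $ j * (m - x $ j)) = 0"
      using that(1) by (simp add: out_degree_def sum_distrib_left sum_subtractf algebra_simps)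
    moreover have "\<forall>j\<in>UNIV. 0 \<le> W $ a $ j * (m - x $ j)"
      using nonneg le by (simp add: mult_nonneg_nonneg)
    ultimately have "W $ a $ b * (m - x $ b) = 0"
      using sum_nonneg_eq_0_iff[of UNIV "\<lambda>j. W $ a $ j * (m - x $ j)"] by simp
    moreover have "W $ a $ b > 0" using that(2) by (simp add: edges_def)
    ultimately show ?thesis by simp
  qed
  from path imax[folded m_def] show ?thesis unfolding m_def[symmetric]
  proof (induction rule: trancl_induct)
    case (base y) then show ?case using stp by blast
  next
    case (step y z) then show ?case using stp by blast
  qed
qed

lemma harmonic_const:
  fixes W :: "real^'n^'n" and x :: "real^'n"
  assumes nonneg: "\<forall>i j. W $ i $ j \<ge> 0"
    and deg_pos: "\<forall>i. out_degree W i > 0"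
    and L0: "L_rw W *v x = 0"
    and reach: "\<forall>i. i \<noteq> v \<longrightarrow> (i, v) \<in> (edges W)\<^sup>+"
  shows "x $ j \<le> x $ v"
proof -
  have "Max (range (\<lambda>j. x $ j)) \<in> range (\<lambda>j. x $ j)" by (rule Max_in) auto
  then obtain i where i: "x $ i = Max (range (\<lambda>j. x $ j))" by (metis imageE)
  have "x $ v = Max (range (\<lambda>j. x $ j))"
  proof (cases "i = v")
    case True then show ?thesis using i by simp
  next
    case False then show ?thesis using harmonic_max[OF nonneg deg_pos L0 _ i] reach by blast
  qed
  moreover have "x $ j \<le> Max (range (\<lambda>j. x $ j))" by (rule Max_ge) auto
  ultimately show ?thesis by simp
qed

theorem mainTheorem3:
  fixes W :: "real^'n^'n" and H :: "real^'n^'k" and \<mu> :: real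
  assumes nonneg: "\<forall>i j. W $ i $ j \<ge> 0"
    and zero_diag: "\<forall>i. W $ i $ i = 0"
    and deg_pos: "\<forall>i. out_degree W i > 0"
    and reach: "\<exists>v. \<forall>i. i \<noteq> v \<longrightarrow> (i, v) \<in> (edges W)\<^sup>+"
    and mu_pos: "\<mu> > 0"
    and samp: "sampling_matrix H"
    and K_lt_N: "CARD('k) < CARD('n)"
  shows "pos_definite (transpose H ** H + \<mu> *\<^sub>R (transpose (L_rw W) ** L_rw W)) \<and>
    (\<forall>y :: real^'k.
       let M = transpose H ** H + \<mu> *\<^sub>R (transpose (L_rw W) ** L_rw W);
           J = (\<lambda>x :: real^'n. (norm (H *v x - y))\<^sup>2 + \<mu> * (x \<bullet> ((transpose (L_rw W) ** L_rw W) *v x)))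
       in {x. \<forall>z. J x \<le> J z} = {matrix_inv M *v (transpose H *v y)})"
proof -
  define L where "L = L_rw W"
  define M where "M = transpose H ** H + \<mu> *\<^sub>R (transpose L ** L)"
  obtain v where v: "\<forall>i. i \<noteq> v \<longrightarrow> (i, v) \<in> (edges W)\<^sup>+" using reach by blast
  have qM: "x \<bullet> (M *v x) = (norm (H *v x))\<^sup>2 + \<mu> * (norm (L *v x))\<^sup>2" for x
  proof -
    have "M *v x = (transpose H ** H) *v x + \<mu> *\<^sub>R ((transpose L ** L) *v x)"
      unfolding M_def by (simp add: matrix_vector_mult_add_rdistrib scaleR_matrix_vector_assoc)
    thus ?thesis by (simp add: inner_add_right quad_eq)
  qed
  have symM: "transpose M = M"
    unfolding M_def by (simp add: transpose_add' transpose_scalar matrix_transpose_mul)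
  have pd: "x \<bullet> (M *v x) > 0" if "x \<noteq> 0" for x
  proof (rule ccontr)
    assume "\<not> ?thesis"
    hence "(norm (H *v x))\<^sup>2 + \<mu> * (norm (L *v x))\<^sup>2 \<le> 0" using qM by simp
    moreover have "0 \<le> (norm (H *v x))\<^sup>2" by simp
    moreover have "0 \<le> \<mu> * (norm (L *v x))\<^sup>2" using mu_pos by simp
    ultimately have "(norm (H *v x))\<^sup>2 = 0" "\<mu> * (norm (L *v x))\<^sup>2 = 0" by linarith+
    hence Hx: "H *v x = 0" and Lx: "L *v x = 0" using mu_pos by auto
    have eq: "x $ j = x $ v" for j
    proof -
      have "x $ j \<le> x $ v" using harmonic_const[OF nonneg deg_pos _ v] Lx L_def by blast
      moreover have "L *v (-x) = 0" using Lx matrix_vector_mult_diff_distrib[of L 0 x] by simp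
      hence "(-x) $ j \<le> (-x) $ v" using harmonic_const[OF nonneg deg_pos _ v] L_def by blast
      ultimately show ?thesis by simp
    qed
    obtain k :: 'k where True by blast
    obtain j0 where j0: "H $ k $ j0 = 1" using samp unfolding sampling_matrix_def by blast
    have Hk: "H $ k $ j = (if j = j0 then 1 else 0)" for j
      using samp j0 unfolding sampling_matrix_def by metis
    have "(H *v x) $ k = x $ j0"
      by (simp add: matrix_vector_mult_def Hk if_distrib[where f="\<lambda>t. t * _"] cong: if_cong)
    hence "x $ j0 = 0" using Hx by simp
    hence "x = 0" unfolding vec_eq_iff using eq by (metis zero_index)
    thus False using that by simp
  qed
  have inj: "M *v x = 0 \<Longrightarrow> x = 0" for x
    using pd[of x] by force
  have "invertible M"
    using inj matrix_left_invertible_ker invertible_left_inverse by blast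
  hence Minv: "M ** matrix_inv M = mat 1"
    unfolding invertible_def matrix_inv_def using someI_ex[of "\<lambda>A'. M ** A' = mat 1 \<and> A' ** M = mat 1"] by blast
  have part1: "pos_definite M" unfolding pos_definite_def using symM pd by blast
  have part2: "{x. \<forall>z. J x \<le> J z} = {matrix_inv M *v (transpose H *v y)}"
    if J_def: "J = (\<lambda>x :: real^'n. (norm (H *v x - y))\<^sup>2 + \<mu> * (x \<bullet> ((transpose L ** L) *v x)))"
    for y J
  proof -
    define b where "b = transpose H *v y"
    define xs where "xs = matrix_inv M *v b"
    have Mxs: "M *v xs = b" unfolding xs_def by (simp add: matrix_vector_mul_assoc Minv)
    have sym: "u \<bullet> (M *v w) = w \<bullet> (M *v u)" for u w
      by (metis dot_mv symM inner_commute)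
    have Jx: "J x = x \<bullet> (M *v x) - 2 * (x \<bullet> b) + (norm y)\<^sup>2" for x
    proof -
      have "(norm (H *v x - y))\<^sup>2 = (norm (H *v x))\<^sup>2 - 2 * ((H *v x) \<bullet> y) + (norm y)\<^sup>2"
        by (simp add: power2_norm_eq_inner inner_diff_left inner_diff_right inner_commute)
      moreover have "(H *v x) \<bullet> y = x \<bullet> b"
        unfolding b_def by (metis dot_mv inner_commute)
      moreover have "x \<bullet> ((transpose L ** L) *v x) = (norm (L *v x))\<^sup>2" by (rule quad_eq)
      ultimately show ?thesis using qM[of x] J_def by simp
    qed
    have key: "J x = (x - xs) \<bullet> (M *v (x - xs)) + (norm y)\<^sup>2 - xs \<bullet> b" for x
    proof -
      have "(x - xs) \<bullet> (M *v (x - xs)) = x \<bullet> (M *v x) - 2 * (x \<bullet> (M *v xs)) + xs \<bullet> (M *v xs)"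
        using sym[of xs x]
        by (simp add: matrix_vector_mult_diff_distrib inner_diff_left inner_diff_right)
      thus ?thesis using Jx[of x] Mxs by simp
    qed
    have ge: "J xs \<le> J z" for z
    proof -
      have "0 \<le> (z - xs) \<bullet> (M *v (z - xs))" using pd[of "z - xs"] by (cases "z = xs") auto
      thus ?thesis using key[of z] key[of xs] by simp
    qed
    have uniq: "x = xs" if "\<forall>z. J x \<le> J z" for x
    proof (rule ccontr)
      assume "x \<noteq> xs"
      hence "0 < (x - xs) \<bullet> (M *v (x - xs))" using pd by simp
      moreover have "J x \<le> J xs" using that by blast
      ultimately show False using key[of x] key[of xs] by simp
    qed
    show ?thesis using ge uniq unfolding xs_def b_def by blast
  qed
  show ?thesis unfolding Let_def L_def[symmetric] M_def[symmetric]
  proof (intro conjI allI)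
    show "pos_definite M" by (rule part1)
  next
    fix y :: "real^'k"
    show "{x. \<forall>z. (norm (H *v x - y))\<^sup>2 + \<mu> * (x \<bullet> ((transpose L ** L) *v x))
          \<le> (norm (H *v z - y))\<^sup>2 + \<mu> * (z \<bullet> ((transpose L ** L) *v z))} =
       {matrix_inv M *v (transpose H *v y)}"
      by (rule part2) (rule refl)
  qed
qed

end
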